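(* Let $\Gamma=(V,E)$ be a locally finite reflexive graph with $V\neq\emptyset$, and let $k$ be a nonnegative integer with $k\le\kappa_1(\Gamma)$. Let $X$ be a finite subset of $V$ with $\min(|V\setminus X|,|X|)\ge k$. Then there exist pairwise distinct $x_1,\dots,x_k\in X$ and pairwise distinct $y_1,\dots,y_k\in V\setminus X$ such that $(x_i,y_i)\in E$ for all $1\le i\le k$.
   Context: A graph is a pair $\Gamma=(V,E)$ with $E\subseteq V\times V$; reflexive means $(x,x)\in E$ for all $x$; locally finite means each $\Gamma(x)=\{y:(x,y)\in E\}$ is finite. $\Gamma(A)=\bigcup_{x\in A}\Gamma(x)$, $\partial(A)=\Gamma(A)\setminus A$. If there is a finite nonempty $X$ with $\Gamma(X)\neq V$, then $\kappa_1(\Gamma)=\min\{|\partial(X)|: X \text{ finite nonempty}, \Gamma(X)\ne V\}$; otherwise ($V$ finite) $\kappa_1(\Gamma)=|V|-1$ by convention. *)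

theory Defs
  imports Main
begin

definition graph :: "'a set \<Rightarrow> ('a \<times> 'a) set \<Rightarrow> bool" where
  "graph V E \<longleftrightarrow> E \<subseteq> V \<times> V"

definition reflexive_graph :: "'a set \<Rightarrow> ('a \<times> 'a) set \<Rightarrow> bool" where
  "reflexive_graph V E \<longleftrightarrow> (\<forall>x\<in>V. (x, x) \<in> E)"

definition nbhd :: "('a \<times> 'a) set \<Rightarrow> 'a \<Rightarrow> 'a set" where
  "nbhd E x = {y. (x, y) \<in> E}"

definition locally_finite :: "'a set \<Rightarrow> ('a \<times> 'a) set \<Rightarrow> bool" where
  "locally_finite V E \<longleftrightarrow> (\<forall>x\<in>V. finite (nbhd E x))"

definition nbhd_set :: "('a \<times> 'a) set \<Rightarrow> 'a set \<Rightarrow> 'a set" where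
  "nbhd_set E A = (\<Union>x\<in>A. nbhd E x)"

definition boundary :: "('a \<times> 'a) set \<Rightarrow> 'a set \<Rightarrow> 'a set" where
  "boundary E A = nbhd_set E A - A"

definition kappa1_admissible :: "'a set \<Rightarrow> ('a \<times> 'a) set \<Rightarrow> 'a set \<Rightarrow> bool" where
  "kappa1_admissible V E X \<longleftrightarrow> finite X \<and> X \<noteq> {} \<and> X \<subseteq> V \<and> nbhd_set E X \<noteq> V"

definition kappa1 :: "'a set \<Rightarrow> ('a \<times> 'a) set \<Rightarrow> nat" where
  "kappa1 V E =
     (if \<exists>X. kappa1_admissible V E X
      then (LEAST n. \<exists>X. kappa1_admissible V E X \<and> n = card (boundary E X))
      else card V - 1)"

end

theory Submission
  imports Defs
begin

lemma hall:
  assumes "finite A" "\<forall>x\<in>A. finite (N x)" "\<forall>S\<subseteq>A. card S \<le> card (\<Union>(N ` S))"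
  shows "\<exists>f. inj_on f A \<and> (\<forall>x\<in>A. f x \<in> N x)"
  using assms
proof (induction "card A" arbitrary: A N rule: less_induct)
  case less
  show ?case
  proof (cases "A = {}")
    case True thus ?thesis by auto
  next
    case ne: False
    show ?thesis
    proof (cases "\<exists>S. S \<subseteq> A \<and> S \<noteq> {} \<and> S \<noteq> A \<and> card (\<Union>(N ` S)) = card S")
      case True
      then obtain S where S: "S \<subseteq> A" "S \<noteq> {}" "S \<noteq> A" "card (\<Union>(N ` S)) = card S" by blast
      have fS: "finite S" using S(1) less.prems(1) finite_subset by auto
      have cS: "card S < card A" using S(1,3) less.prems(1) by (meson psubsetI psubset_card_mono)
      have "\<exists>g. inj_on g S \<and> (\<forall>x\<in>S. g x \<in> N x)"
        apply (rule less.hyps[OF cS fS])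
        using less.prems(2,3) S(1) by auto
      then obtain g where g: "inj_on g S" "\<forall>x\<in>S. g x \<in> N x" by blast
      define M where "M = \<Union>(N ` S)"
      define N2 where "N2 = (\<lambda>x. N x - M)"
      have fM: "finite M" using fS less.prems(2) S(1) unfolding M_def by auto
      have cAS: "card (A - S) < card A"
        using S(1,2) less.prems(1) by (intro psubset_card_mono) auto
      have hall2: "\<forall>T\<subseteq>A-S. card T \<le> card (\<Union>(N2 ` T))"
      proof (intro allI impI)
        fix T assume T: "T \<subseteq> A - S"
        have fT: "finite T" using T less.prems(1) finite_subset by auto
        have f2: "finite (\<Union>(N2 ` T))" using fT T less.prems(2) unfolding N2_def by auto
        have eq: "\<Union>(N ` (T \<union> S)) = \<Union>(N2 ` T) \<union> M" by (auto simp: N2_def M_def)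
        have disj: "\<Union>(N2 ` T) \<inter> M = {}" by (auto simp: N2_def)
        have "card T + card S = card (T \<union> S)" using T fT fS by (subst card_Un_disjoint) auto
        also have "\<dots> \<le> card (\<Union>(N ` (T \<union> S)))" using less.prems(3) T S(1)
          by (metis Diff_subset le_supI subset_trans)
        also have "\<dots> = card (\<Union>(N2 ` T)) + card M" using eq disj f2 fM by (simp add: card_Un_disjoint)
        finally show "card T \<le> card (\<Union>(N2 ` T))" using S(4) M_def by simp
      qed
      have "\<exists>h. inj_on h (A-S) \<and> (\<forall>x\<in>A-S. h x \<in> N2 x)"
        apply (rule less.hyps[OF cAS])
        using less.prems(1,2) hall2 by (auto simp: N2_def)
      then obtain h where h: "inj_on h (A-S)" "\<forall>x\<in>A-S. h x \<in> N2 x" by blast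
      define f where "f x = (if x \<in> S then g x else h x)" for x
      have "inj_on f A"
      proof (rule inj_onI)
        fix x y assume xy: "x \<in> A" "y \<in> A" "f x = f y"
        show "x = y"
        proof (cases "x \<in> S"; cases "y \<in> S")
          assume "x \<in> S" "y \<in> S" thus ?thesis using xy g(1) by (auto simp: f_def inj_on_def)
        next
          assume "x \<notin> S" "y \<notin> S" thus ?thesis using xy h(1) by (auto simp: f_def inj_on_def)
        next
          assume a: "x \<in> S" "y \<notin> S"
          hence "g x \<in> M" using g(2) M_def by auto
          moreover have "h y \<notin> M" using h(2) a xy by (auto simp: N2_def)
          ultimately show ?thesis using xy a by (auto simp: f_def)
        next
          assume a: "x \<notin> S" "y \<in> S"
          hence "g y \<in> M" using g(2) M_def by auto
          moreover have "h x \<notin> M" using h(2) a xy by (auto simp: N2_def)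
          ultimately show ?thesis using xy a by (auto simp: f_def)
        qed
      qed
      moreover have "\<forall>x\<in>A. f x \<in> N x" using g(2) h(2) by (auto simp: f_def N2_def)
      ultimately show ?thesis by blast
    next
      case False
      hence strict: "\<And>S. S \<subseteq> A \<Longrightarrow> S \<noteq> {} \<Longrightarrow> S \<noteq> A \<Longrightarrow> card S < card (\<Union>(N ` S))"
        using less.prems(3) by (metis le_neq_implies_less)
      obtain a where a: "a \<in> A" using ne by auto
      have "card {a} \<le> card (N a)" using less.prems(3)[rule_format, of "{a}"] a by simp
      hence "N a \<noteq> {}" by auto
      then obtain b where b: "b \<in> N a" by blast
      define N2 where "N2 = (\<lambda>x. N x - {b})"
      have cA: "card (A - {a}) < card A" using a less.prems(1) by (metis card_Diff1_less)
      have hall2: "\<forall>T\<subseteq>A-{a}. card T \<le> card (\<Union>(N2 ` T))"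
      proof (intro allI impI)
        fix T assume T: "T \<subseteq> A - {a}"
        show "card T \<le> card (\<Union>(N2 ` T))"
        proof (cases "T = {}")
          case True thus ?thesis by simp
        next
          case False
          have "T \<noteq> A" using T a by auto
          hence lt: "card T < card (\<Union>(N ` T))" using strict T False by auto
          have fT: "finite T" using T less.prems(1) finite_subset by auto
          have fU: "finite (\<Union>(N ` T))" using fT T less.prems(2) by auto
          have eq: "\<Union>(N2 ` T) = \<Union>(N ` T) - {b}" by (auto simp: N2_def)
          have "card (\<Union>(N ` T)) \<le> card (\<Union>(N ` T) - {b}) + 1"
            using fU by (cases "b \<in> \<Union>(N ` T)") (auto simp: card_Diff_singleton_if card_gt_0_iff)
          thus ?thesis using lt eq by simp
        qed
      qed
      have "\<exists>h. inj_on h (A-{a}) \<and> (\<forall>x\<in>A-{a}. h x \<in> N2 x)"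
        apply (rule less.hyps[OF cA])
        using less.prems(1,2) hall2 by (auto simp: N2_def)
      then obtain h where h: "inj_on h (A-{a})" "\<forall>x\<in>A-{a}. h x \<in> N2 x" by blast
      define f where "f = h(a := b)"
      have "inj_on f A"
      proof (rule inj_onI)
        fix x y assume xy: "x \<in> A" "y \<in> A" "f x = f y"
        show "x = y"
          using xy h unfolding f_def N2_def inj_on_def
          by (metis DiffE DiffI fun_upd_apply singletonD singletonI)
      qed
      moreover have "\<forall>x\<in>A. f x \<in> N x" using h(2) b by (auto simp: f_def N2_def)
      ultimately show ?thesis by blast
    qed
  qed
qed


lemma cond:
  fixes V :: "'a set" and E :: "('a \<times> 'a) set"
  assumes "graph V E" and "locally_finite V E"
    and "k \<le> kappa1 V E"
    and "finite X" and "X \<subseteq> V"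
    and "card X \<ge> k" and "infinite (V - X) \<or> card (V - X) \<ge> k"
    and S: "S \<subseteq> X"
  shows "k \<le> card (nbhd_set E S - X) + card (X - S)"
proof (cases "S = {}")
  case True thus ?thesis using assms(6) by simp
next
  case ne: False
  have fS: "finite S" using S assms(4) finite_subset by auto
  have "\<forall>x\<in>S. finite (nbhd E x)" using S assms(5) assms(2)
    unfolding locally_finite_def by auto
  hence fN: "finite (nbhd_set E S)" using fS unfolding nbhd_set_def by auto
  show ?thesis
  proof (cases "nbhd_set E S = V")
    case True
    hence "finite V" using fN by simp
    hence "card (V - X) \<ge> k" using assms(7) by auto
    thus ?thesis using True by simp
  next
    case False
    have adm: "kappa1_admissible V E S" using False fS ne S assms(5)
      unfolding kappa1_admissible_def by auto
    hence k1: "kappa1 V E = (LEAST n. \<exists>X. kappa1_admissible V E X \<and> n = card (boundary E X))"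
      unfolding kappa1_def by auto
    have "kappa1 V E \<le> card (boundary E S)"
      unfolding k1 by (rule Least_le) (use adm in blast)
    also have "\<dots> \<le> card ((nbhd_set E S - X) \<union> (X - S))"
      apply (rule card_mono) using fN assms(4) unfolding boundary_def by auto
    also have "\<dots> \<le> card (nbhd_set E S - X) + card (X - S)" by (rule card_Un_le)
    finally show ?thesis using assms(3) by simp
  qed
qed

theorem mainTheorem19:
  fixes V :: "'a set" and E :: "('a \<times> 'a) set" and k :: nat and X :: "'a set"
  assumes "graph V E" and "reflexive_graph V E" and "locally_finite V E"
    and "V \<noteq> {}"
    and "k \<le> kappa1 V E"
    and "finite X" and "X \<subseteq> V"
    and "card X \<ge> k" and "infinite (V - X) \<or> card (V - X) \<ge> k"
  shows "\<exists>x y :: nat \<Rightarrow> 'a. inj_on x {1..k} \<and> inj_on y {1..k} \<and>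
           (\<forall>i\<in>{1..k}. x i \<in> X \<and> y i \<in> V - X \<and> (x i, y i) \<in> E)"
proof -
  define d where "d = card X - k"
  define N :: "'a \<Rightarrow> ('a + nat) set" where "N x = Inl ` (nbhd E x - X) \<union> Inr ` {..<d}" for x
  have fin: "\<forall>x\<in>X. finite (N x)" using assms(3,7) unfolding N_def locally_finite_def by auto
  have hc: "\<forall>S\<subseteq>X. card S \<le> card (\<Union>(N ` S))"
  proof (intro allI impI)
    fix S assume S: "S \<subseteq> X"
    show "card S \<le> card (\<Union>(N ` S))"
    proof (cases "S = {}")
      case True thus ?thesis by simp
    next
      case False
      have fS: "finite S" using S assms(6) finite_subset by auto
      have "\<forall>x\<in>S. finite (nbhd E x)" using S assms(7) assms(3)
        unfolding locally_finite_def by auto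
      hence fN: "finite (nbhd_set E S)" using fS unfolding nbhd_set_def by auto
      have eq: "\<Union>(N ` S) = Inl ` (nbhd_set E S - X) \<union> Inr ` {..<d}"
        using False unfolding N_def nbhd_set_def by auto
      have "card (\<Union>(N ` S)) = card (nbhd_set E S - X) + d"
        unfolding eq using fN
        by (subst card_Un_disjoint) (auto simp: card_image)
      moreover have "k \<le> card (nbhd_set E S - X) + card (X - S)"
        using cond[OF assms(1,3,5,6,7,8,9) S] .
      moreover have "card (X - S) = card X - card S" using S fS by (simp add: card_Diff_subset)
      moreover have "card S \<le> card X" using S assms(6) card_mono by auto
      ultimately show ?thesis using assms(8) unfolding d_def by linarith
    qed
  qed
  obtain f where f: "inj_on f X" "\<forall>x\<in>X. f x \<in> N x" using hall[OF assms(6) fin hc] by blast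
  define X0 where "X0 = {x\<in>X. \<exists>y. f x = Inl y}"
  have "f ` (X - X0) \<subseteq> Inr ` {..<d}"
  proof
    fix z assume "z \<in> f ` (X - X0)"
    then obtain x where x: "x \<in> X" "x \<notin> X0" "z = f x" by (auto)
    thus "z \<in> Inr ` {..<d}" using f(2) unfolding X0_def N_def by auto
  qed
  hence "card (f ` (X - X0)) \<le> card (Inr ` {..<d} :: ('a + nat) set)" by (intro card_mono) auto
  also have "\<dots> = d" by (simp add: card_image)
  finally have c0: "card (f ` (X - X0)) \<le> d" .
  have "inj_on f (X - X0)" using f(1) by (rule inj_on_subset) auto
  hence c1: "card (X - X0) \<le> d" using c0 by (simp add: card_image)
  have "X0 \<subseteq> X" unfolding X0_def by auto
  have fX0: "finite X0" using \<open>X0 \<subseteq> X\<close> assms(6) by (rule finite_subset)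
  have "card (X - X0) = card X - card X0" by (rule card_Diff_subset[OF fX0 \<open>X0 \<subseteq> X\<close>])
  moreover have "card X0 \<le> card X" using \<open>X0 \<subseteq> X\<close> assms(6) by (rule card_mono[rotated])
  ultimately have "k \<le> card X0" using c1 assms(8) unfolding d_def by linarith
  then obtain B where B: "B \<subseteq> X0" "card B = k" by (rule obtain_subset_with_card_n)
  have fB: "finite B" using B(1) fX0 by (rule finite_subset)
  obtain h where h: "bij_betw h {1..k} B" using ex_bij_betw_nat_finite_1[OF fB] B(2) by auto
  define y where "y i = projl (f (h i))" for i
  have hB: "\<And>i. i \<in> {1..k} \<Longrightarrow> h i \<in> X0" using h B(1) bij_betwE by blast
  have Inl: "\<And>i. i \<in> {1..k} \<Longrightarrow> f (h i) = Inl (y i)" using hB unfolding X0_def y_def by fastforce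
  have "inj_on h {1..k}" using h bij_betw_def by blast
  moreover have "inj_on y {1..k}"
  proof (rule inj_onI)
    fix i j assume ij: "i \<in> {1..k}" "j \<in> {1..k}" "y i = y j"
    hence "f (h i) = f (h j)" using Inl by metis
    hence "h i = h j" using f(1) hB ij \<open>X0 \<subseteq> X\<close> by (meson inj_onD subsetD)
    thus "i = j" using \<open>inj_on h {1..k}\<close> ij by (meson inj_onD)
  qed
  moreover have "\<forall>i\<in>{1..k}. h i \<in> X \<and> y i \<in> V - X \<and> (h i, y i) \<in> E"
  proof
    fix i assume i: "i \<in> {1..k}"
    have hX: "h i \<in> X" using hB[OF i] \<open>X0 \<subseteq> X\<close> by auto
    have "Inl (y i) \<in> N (h i)" using f(2) hX Inl[OF i] by metis
    hence "y i \<in> nbhd E (h i) - X" unfolding N_def by auto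
    thus "h i \<in> X \<and> y i \<in> V - X \<and> (h i, y i) \<in> E"
      using hX assms(1) unfolding nbhd_def graph_def by auto
  qed
  ultimately show ?thesis by blast
qed

end
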